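(* Let $X,Y$ be random vectors in $\mathbb{R}^m$ and $\mathbb{R}^n$, and let $\mu,\nu$ be finite symmetric Lévy measures on $\mathbb{R}^m\setminus\{0\}$ and $\mathbb{R}^n\setminus\{0\}$ with full support. Let $\Phi(x)=\int(1-\cos\langle x,s\rangle)\mu(ds)$, $\Psi(y)=\int(1-\cos\langle y,t\rangle)\nu(dt)$, $\rho=\mu\otimes\nu$ and $\Theta(u)=\int(1-\cos\langle u,r\rangle)\,\rho(dr)$ for $u\in\mathbb{R}^{m+n}$. Let $(X_i,Y_i)$, $i=1,\dots,6$, be i.i.d. copies of $(X,Y)$ and set $U=(X_1,Y_1)$, $V=(X_2,Y_3)$, $U'=(X_4,Y_4)$, $V'=(X_5,Y_6)$. Then \begin{align*} V^2(X,Y)&=d_\rho^2(\mathcal L(U),\mathcal L(V))=2\mathbb{E}\Theta(U-V')-\mathbb{E}\Theta(U-U')-\mathbb{E}\Theta(V-V')\\ &=2\mathbb{E}\Theta(X_1-X_5,Y_1-Y_6)-\mathbb{E}\Theta(X_1-X_4,Y_1-Y_4)-\mathbb{E}\Theta(X_2-X_5,Y_3-Y_6)\\ &=\mathbb{E}\Phi(X_1-X_4)\Psi(Y_1-Y_4)+\mathbb{E}\Phi(X_2-X_5)\,\mathbb{E}\Psi(Y_3-Y_6)-2\mathbb{E}\Phi(X_1-X_5)\Psi(Y_1-Y_6). \end{align*}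
   Context: Symmetric Lévy measure on $\mathbb{R}^d\setminus\{0\}$: $\rho(B)=\rho(-B)$ and $\int(1\wedge|r|^2)\rho(dr)<\infty$; full support: positive mass on every nonempty open subset. $V^2(X,Y)=\iint|f_{(X,Y)}(s,t)-f_X(s)f_Y(t)|^2\,\mu(ds)\,\nu(dt)$ with $f$ characteristic functions; for random vectors $U,V$ in $\mathbb{R}^d$, $d_\rho(\mathcal L(U),\mathcal L(V))=(\int|f_U-f_V|^2\,d\rho)^{1/2}$. *)

theory Defs
  imports "HOL-Probability.Probability"
begin

definition charf :: "'b::euclidean_space measure \<Rightarrow> 'b \<Rightarrow> complex" where
  "charf P s = integral\<^sup>L P (\<lambda>x. cis (s \<bullet> x))"

definition char_fun :: "'a measure \<Rightarrow> ('a \<Rightarrow> 'b::euclidean_space) \<Rightarrow> 'b \<Rightarrow> complex" where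
  "char_fun M X s = charf (distr M borel X) s"

definition sym_levy_measure :: "'b::euclidean_space measure \<Rightarrow> bool" where
  "sym_levy_measure \<mu> \<longleftrightarrow>
     sets \<mu> = sets borel \<and> emeasure \<mu> {0} = 0 \<and>
     (\<forall>B\<in>sets \<mu>. emeasure \<mu> (uminus ` B) = emeasure \<mu> B) \<and>
     (\<integral>\<^sup>+ r. ennreal (min 1 (norm r ^ 2)) \<partial>\<mu>) < \<infinity>"

definition full_support :: "'b::euclidean_space measure \<Rightarrow> bool" where
  "full_support \<mu> \<longleftrightarrow> (\<forall>U. open U \<and> U \<noteq> {} \<and> 0 \<notin> U \<longrightarrow> emeasure \<mu> U > 0)"

definition dcov_sq :: "'a measure \<Rightarrow> 'm::euclidean_space measure \<Rightarrow> 'n::euclidean_space measure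
    \<Rightarrow> ('a \<Rightarrow> 'm) \<Rightarrow> ('a \<Rightarrow> 'n) \<Rightarrow> real" where
  "dcov_sq M \<mu> \<nu> X Y =
     (\<integral>t. (\<integral>s. (cmod (char_fun M (\<lambda>\<omega>. (X \<omega>, Y \<omega>)) (s, t) - char_fun M X s * char_fun M Y t))\<^sup>2 \<partial>\<mu>) \<partial>\<nu>)"

definition d_rho :: "'b::euclidean_space measure \<Rightarrow> 'b measure \<Rightarrow> 'b measure \<Rightarrow> real" where
  "d_rho \<rho> P Q = sqrt (\<integral>r. (cmod (charf P r - charf Q r))\<^sup>2 \<partial>\<rho>)"

end

theory Submission
  imports Defs
begin


lemma meas_borel_sets:
  assumes "sets N = sets borel" "f \<in> borel_measurable borel"
  shows "f \<in> borel_measurable N"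
  using assms measurable_cong_sets by blast

lemma sets_pair_borel:
  assumes "sets A = sets (borel::'a::second_countable_topology measure)"
    "sets B = sets (borel::'b::second_countable_topology measure)"
  shows "sets (A \<Otimes>\<^sub>M B) = sets (borel :: ('a \<times> 'b) measure)"
  using sets_pair_measure_cong[OF assms] borel_prod by metis

lemma cis_inner_meas: "(\<lambda>x. cis (r \<bullet> (x::'b::euclidean_space))) \<in> borel_measurable borel"
  by (intro borel_measurable_continuous_onI continuous_intros)

lemma cis_inner_meas2: "(\<lambda>(r,x). cis (r \<bullet> (x::'b::euclidean_space))) \<in> borel_measurable borel"
  by (intro borel_measurable_continuous_onI continuous_intros) (auto simp: case_prod_beta intro!: continuous_intros)

lemma charf_distr:
  assumes "Z \<in> borel_measurable M"
  shows "charf (distr M borel Z) r = (\<integral>\<omega>. cis (r \<bullet> Z \<omega>) \<partial>M)"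
  unfolding charf_def using assms cis_inner_meas
  by (subst integral_distr) auto

lemma charf_bound:
  assumes "prob_space P"
  shows "cmod (charf P r) \<le> 1"
proof -
  interpret prob_space P by fact
  have "cmod (charf P r) \<le> (\<integral>x. norm (cis (r \<bullet> x)) \<partial>P)"
    unfolding charf_def by (rule integral_norm_bound)
  also have "\<dots> = 1" by (simp add: prob_space)
  finally show ?thesis .
qed

lemma charf_meas:
  fixes P :: "'b::euclidean_space measure"
  assumes "prob_space P" "sets P = sets borel" "sets N = sets borel"
  shows "charf P \<in> borel_measurable N"
proof -
  interpret prob_space P by fact
  have "(\<lambda>(r,x). cis (r \<bullet> (x::'b))) \<in> borel_measurable (N \<Otimes>\<^sub>M P)"
    using meas_borel_sets[OF sets_pair_borel[OF assms(3,2)] cis_inner_meas2] .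
  then have "(\<lambda>r. \<integral>x. cis (r \<bullet> x) \<partial>P) \<in> borel_measurable N"
    by (intro borel_measurable_lebesgue_integral) auto
  then show ?thesis unfolding charf_def[abs_def] .
qed



lemma cnj_cis_meas: "(\<lambda>x. cnj (cis (r \<bullet> (x::'b::euclidean_space)))) \<in> borel_measurable borel"
  by (intro borel_measurable_continuous_onI continuous_intros)

lemma char_indep:
  fixes A B :: "'a \<Rightarrow> 'b::euclidean_space"
  assumes P: "prob_space M" and ind: "prob_space.indep_var M borel A borel B"
  shows "(\<integral>\<omega>. cos (r \<bullet> (A \<omega> - B \<omega>)) \<partial>M)
     = Re (charf (distr M borel A) r * cnj (charf (distr M borel B) r))"
proof -
  interpret prob_space M by fact
  have mA: "A \<in> borel_measurable M" and mB: "B \<in> borel_measurable M"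
    using indep_var_rv1[OF ind] indep_var_rv2[OF ind] by auto
  have ind2: "indep_var borel (\<lambda>\<omega>. cis (r \<bullet> A \<omega>)) borel (\<lambda>\<omega>. cnj (cis (r \<bullet> B \<omega>)))"
    using indep_var_compose[OF ind cis_inner_meas[of r] cnj_cis_meas[of r]] by (simp add: comp_def)
  have m1: "(\<lambda>\<omega>. cis (r \<bullet> A \<omega>)) \<in> borel_measurable M"
    using measurable_compose[OF mA cis_inner_meas] .
  have m2: "(\<lambda>\<omega>. cnj (cis (r \<bullet> B \<omega>))) \<in> borel_measurable M"
    using measurable_compose[OF mB cnj_cis_meas] .
  have i1: "integrable M (\<lambda>\<omega>. cis (r \<bullet> A \<omega>))"
    by (rule integrable_const_bound[where B=1]) (auto simp: m1)
  have i2: "integrable M (\<lambda>\<omega>. cnj (cis (r \<bullet> B \<omega>)))"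
    by (rule integrable_const_bound[where B=1]) (auto simp: m2)
  have "charf (distr M borel A) r * cnj (charf (distr M borel B) r)
      = (\<integral>\<omega>. cis (r \<bullet> A \<omega>) \<partial>M) * (\<integral>\<omega>. cnj (cis (r \<bullet> B \<omega>)) \<partial>M)"
    by (simp add: charf_distr[OF mA] charf_distr[OF mB])
  also have "\<dots> = (\<integral>\<omega>. cis (r \<bullet> A \<omega>) * cnj (cis (r \<bullet> B \<omega>)) \<partial>M)"
    using indep_var_lebesgue_integral[OF ind2 i1 i2] by simp
  also have "\<dots> = (\<integral>\<omega>. cis (r \<bullet> (A \<omega> - B \<omega>)) \<partial>M)"
    by (simp add: cis_cnj cis_mult inner_diff_right)
  finally have eq: "charf (distr M borel A) r * cnj (charf (distr M borel B) r)
      = (\<integral>\<omega>. cis (r \<bullet> (A \<omega> - B \<omega>)) \<partial>M)" .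
  have m3: "(\<lambda>\<omega>. cis (r \<bullet> (A \<omega> - B \<omega>))) \<in> borel_measurable M"
    using mA mB by (intro measurable_compose[OF _ cis_inner_meas]) auto
  have i3: "integrable M (\<lambda>\<omega>. cis (r \<bullet> (A \<omega> - B \<omega>)))"
    by (rule integrable_const_bound[where B=1]) (auto simp: m3)
  show ?thesis unfolding eq
    using integral_Re[OF i3] by simp
qed

lemma Fub:
  fixes W :: "'a \<Rightarrow> 'b::euclidean_space"
  assumes P: "prob_space M" and R: "finite_measure R" "sets R = sets borel"
    and W: "W \<in> borel_measurable M"
  shows "integrable R (\<lambda>r. \<integral>\<omega>. 1 - cos (r \<bullet> W \<omega>) \<partial>M)"
    and "(\<integral>r. (\<integral>\<omega>. 1 - cos (r \<bullet> W \<omega>) \<partial>M) \<partial>R) = (\<integral>\<omega>. (\<integral>r. 1 - cos (W \<omega> \<bullet> r) \<partial>R) \<partial>M)"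
proof -
  interpret M: prob_space M by fact
  interpret R: finite_measure R by fact
  interpret pair_sigma_finite R M ..
  interpret RM: finite_measure "R \<Otimes>\<^sub>M M"
    by (rule finite_measure_pair_measure) (auto simp: R M.finite_measure_axioms)
  have idR: "(\<lambda>x. x) \<in> measurable R borel"
    using R(2) measurable_cong_sets measurable_ident_sets by blast
  have g: "(\<lambda>(r,w). 1 - cos (r \<bullet> (w::'b))) \<in> borel_measurable borel"
    by (intro borel_measurable_continuous_onI continuous_intros) (auto simp: case_prod_beta intro!: continuous_intros)
  have pm: "(\<lambda>(r,\<omega>). (r, W \<omega>)) \<in> measurable (R \<Otimes>\<^sub>M M) (borel :: ('b \<times> 'b) measure)"
  proof -
    have "(\<lambda>x. (fst x, W (snd x))) \<in> measurable (R \<Otimes>\<^sub>M M) (borel \<Otimes>\<^sub>M borel)"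
      using idR W by measurable
    then show ?thesis
      using measurable_cong_sets[OF refl sets_pair_borel[of "borel::'b measure" "borel::'b measure"]] by (simp add: case_prod_beta')
  qed
  have f: "(\<lambda>(r,\<omega>). 1 - cos (r \<bullet> W \<omega>)) \<in> borel_measurable (R \<Otimes>\<^sub>M M)"
    using measurable_comp[OF pm g] by (simp add: comp_def case_prod_beta)
  have int: "integrable (R \<Otimes>\<^sub>M M) (\<lambda>(r,\<omega>). 1 - cos (r \<bullet> W \<omega>))"
    by (rule RM.integrable_const_bound[where B=2]) (auto simp: f)
  show "integrable R (\<lambda>r. \<integral>\<omega>. 1 - cos (r \<bullet> W \<omega>) \<partial>M)"
    using integrable_fst[OF int] .
  show "(\<integral>r. (\<integral>\<omega>. 1 - cos (r \<bullet> W \<omega>) \<partial>M) \<partial>R) = (\<integral>\<omega>. (\<integral>r. 1 - cos (W \<omega> \<bullet> r) \<partial>R) \<partial>M)"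
    using Fubini_integral[OF int] by (simp add: inner_commute)
qed



lemma int_cos:
  fixes N :: "'b::euclidean_space measure"
  assumes "finite_measure N" "sets N = sets borel"
  shows "integrable N (\<lambda>t. cos (y \<bullet> t))" "integrable N (\<lambda>t. sin (y \<bullet> t))"
    "integrable N (\<lambda>t. 1 - cos (y \<bullet> t))"
proof -
  interpret finite_measure N by fact
  have m: "(\<lambda>t. cos (y \<bullet> t)) \<in> borel_measurable N" "(\<lambda>t. sin (y \<bullet> t)) \<in> borel_measurable N"
    "(\<lambda>t. 1 - cos (y \<bullet> t)) \<in> borel_measurable N"
    by (auto intro!: meas_borel_sets[OF assms(2)] borel_measurable_continuous_onI continuous_intros)
  show "integrable N (\<lambda>t. cos (y \<bullet> t))"
    by (rule integrable_const_bound[where B=1]) (auto simp: m)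
  show "integrable N (\<lambda>t. sin (y \<bullet> t))"
    by (rule integrable_const_bound[where B=1]) (auto simp: m)
  show "integrable N (\<lambda>t. 1 - cos (y \<bullet> t))"
    by (rule integrable_const_bound[where B=2]) (auto simp: m)
qed

lemma sin_sym_zero:
  fixes \<nu> :: "'b::euclidean_space measure"
  assumes S: "sym_levy_measure \<nu>"
  shows "(\<integral>t. sin (y \<bullet> t) \<partial>\<nu>) = 0"
proof -
  have sets: "sets \<nu> = sets borel" and sym: "\<And>B. B \<in> sets \<nu> \<Longrightarrow> emeasure \<nu> (uminus ` B) = emeasure \<nu> B"
    using S unfolding sym_levy_measure_def by auto
  have sp: "space \<nu> = UNIV" using sets_eq_imp_space_eq[OF sets] by simp
  have mu: "(uminus :: 'b \<Rightarrow> 'b) \<in> measurable \<nu> borel"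
    by (intro meas_borel_sets[OF sets] borel_measurable_continuous_onI continuous_intros)
  have D: "distr \<nu> borel uminus = \<nu>"
  proof (rule measure_eqI)
    show "sets (distr \<nu> borel uminus) = sets \<nu>" using sets by simp
    fix A assume A: "A \<in> sets (distr \<nu> borel uminus)"
    then have A': "A \<in> sets \<nu>" using sets by simp
    have "uminus -` A \<inter> space \<nu> = uminus ` A"
      by (auto simp: sp image_iff intro!: exI[where x="- _"]) (metis minus_minus)
    then show "emeasure (distr \<nu> borel uminus) A = emeasure \<nu> A"
      using A mu by (simp add: emeasure_distr sym[OF A'])
  qed
  have ms: "(\<lambda>t. sin (y \<bullet> t)) \<in> borel_measurable borel"
    by (intro borel_measurable_continuous_onI continuous_intros)
  have "(\<integral>t. sin (y \<bullet> t) \<partial>\<nu>) = (\<integral>t. sin (y \<bullet> t) \<partial>distr \<nu> borel uminus)"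
    by (simp add: D)
  also have "\<dots> = (\<integral>t. sin (y \<bullet> (- t)) \<partial>\<nu>)"
    using mu ms by (subst integral_distr) auto
  also have "\<dots> = - (\<integral>t. sin (y \<bullet> t) \<partial>\<nu>)" by simp
  finally show ?thesis by simp
qed

lemma theta_dec:
  fixes \<mu> :: "'m::euclidean_space measure" and \<nu> :: "'n::euclidean_space measure"
  assumes fm: "finite_measure \<mu>" and fn: "finite_measure \<nu>" and sm: "sets \<mu> = sets borel"
    and sn: "sets \<nu> = sets borel" and sz: "\<And>y. (\<integral>t. sin (y \<bullet> t) \<partial>\<nu>) = 0"
  shows "(\<integral>r. 1 - cos ((x,y) \<bullet> r) \<partial>(\<mu> \<Otimes>\<^sub>M \<nu>))
     = measure \<nu> (space \<nu>) * (\<integral>s. 1 - cos (x \<bullet> s) \<partial>\<mu>) + measure \<mu> (space \<mu>) * (\<integral>t. 1 - cos (y \<bullet> t) \<partial>\<nu>)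
       - (\<integral>s. 1 - cos (x \<bullet> s) \<partial>\<mu>) * (\<integral>t. 1 - cos (y \<bullet> t) \<partial>\<nu>)"
proof -
  interpret m: finite_measure \<mu> by fact
  interpret n: finite_measure \<nu> by fact
  interpret pair_sigma_finite \<mu> \<nu> ..
  interpret mn: finite_measure "\<mu> \<Otimes>\<^sub>M \<nu>"
    by (rule finite_measure_pair_measure) (auto simp: fm fn)
  have f: "(\<lambda>r. 1 - cos ((x,y) \<bullet> r)) \<in> borel_measurable (\<mu> \<Otimes>\<^sub>M \<nu>)"
    by (intro meas_borel_sets[OF sets_pair_borel[OF sm sn]] borel_measurable_continuous_onI continuous_intros)
  have int: "integrable (\<mu> \<Otimes>\<^sub>M \<nu>) (\<lambda>r. 1 - cos ((x,y) \<bullet> r))"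
    by (rule mn.integrable_const_bound[where B=2]) (auto simp: f)
  define C where "C = (\<integral>t. cos (y \<bullet> t) \<partial>\<nu>)"
  define D where "D = (\<integral>s. cos (x \<bullet> s) \<partial>\<mu>)"
  note ic = int_cos[OF fn sn] int_cos[OF fm sm]
  have inner: "(\<integral>t. 1 - cos (x \<bullet> s + y \<bullet> t) \<partial>\<nu>) = measure \<nu> (space \<nu>) - cos (x \<bullet> s) * C" for s
  proof -
    have "(\<integral>t. 1 - cos (x \<bullet> s + y \<bullet> t) \<partial>\<nu>)
        = (\<integral>t. (1 - cos (x \<bullet> s) * cos (y \<bullet> t)) + sin (x \<bullet> s) * sin (y \<bullet> t) \<partial>\<nu>)"
      by (simp add: cos_add algebra_simps)
    also have "\<dots> = measure \<nu> (space \<nu>) - cos (x \<bullet> s) * C + sin (x \<bullet> s) * (\<integral>t. sin (y \<bullet> t) \<partial>\<nu>)"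
    proof -
      have i1: "integrable \<nu> (\<lambda>t. 1 - cos (x \<bullet> s) * cos (y \<bullet> t))"
        by (rule Bochner_Integration.integrable_diff[OF n.integrable_const integrable_mult_right[OF ic(1)]])
      have i2: "integrable \<nu> (\<lambda>t. sin (x \<bullet> s) * sin (y \<bullet> t))"
        by (rule integrable_mult_right[OF ic(2)])
      have "(\<integral>t. 1 - cos (x \<bullet> s) * cos (y \<bullet> t) \<partial>\<nu>) = measure \<nu> (space \<nu>) - cos (x \<bullet> s) * C"
        using ic by (subst Bochner_Integration.integral_diff) (auto simp: C_def)
      then show ?thesis using Bochner_Integration.integral_add[OF i1 i2] by simp
    qed
    finally show ?thesis by (simp add: sz)
  qed
  have "(\<integral>r. 1 - cos ((x,y) \<bullet> r) \<partial>(\<mu> \<Otimes>\<^sub>M \<nu>)) = (\<integral>s. (\<integral>t. 1 - cos ((x,y) \<bullet> (s,t)) \<partial>\<nu>) \<partial>\<mu>)"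
    using integral_fst'[OF int] by simp
  also have "\<dots> = (\<integral>s. measure \<nu> (space \<nu>) - cos (x \<bullet> s) * C \<partial>\<mu>)"
    by (simp add: inner)
  also have "\<dots> = measure \<mu> (space \<mu>) * measure \<nu> (space \<nu>) - D * C"
    using ic by (subst Bochner_Integration.integral_diff) (auto simp: D_def)
  finally have E: "(\<integral>r. 1 - cos ((x,y) \<bullet> r) \<partial>(\<mu> \<Otimes>\<^sub>M \<nu>)) = measure \<mu> (space \<mu>) * measure \<nu> (space \<nu>) - D * C" .
  have P1: "(\<integral>s. 1 - cos (x \<bullet> s) \<partial>\<mu>) = measure \<mu> (space \<mu>) - D"
    using ic by (subst Bochner_Integration.integral_diff) (auto simp: D_def)
  have P2: "(\<integral>t. 1 - cos (y \<bullet> t) \<partial>\<nu>) = measure \<nu> (space \<nu>) - C"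
    using ic by (subst Bochner_Integration.integral_diff) (auto simp: C_def)
  show ?thesis unfolding E P1 P2 by (simp add: algebra_simps)
qed

lemma indep_grp:
  assumes P: "prob_space M" and ind: "prob_space.indep_vars M M' Z I"
    and KL: "K \<inter> L = {}" "K \<subseteq> I" "L \<subseteq> I"
    and F: "F \<in> measurable (PiM K M') N1" and G: "G \<in> measurable (PiM L M') N2"
  shows "prob_space.indep_var M N1 (\<lambda>\<omega>. F (\<lambda>i\<in>K. Z i \<omega>)) N2 (\<lambda>\<omega>. G (\<lambda>i\<in>L. Z i \<omega>))"
proof -
  interpret prob_space M by fact
  show ?thesis
    using indep_var_compose[OF indep_var_restrict[OF ind KL] F G] by (simp add: comp_def)
qed



lemma phi_meas:
  fixes N :: "'b::euclidean_space measure"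
  assumes "finite_measure N" "sets N = sets borel"
  shows "(\<lambda>x. \<integral>s. 1 - cos (x \<bullet> s) \<partial>N) \<in> borel_measurable borel"
proof -
  interpret finite_measure N by fact
  have "(\<lambda>(x,s). 1 - cos (x \<bullet> (s::'b))) \<in> borel_measurable (borel \<Otimes>\<^sub>M N)"
    by (intro meas_borel_sets[OF sets_pair_borel[OF refl assms(2)]] borel_measurable_continuous_onI)
      (auto simp: case_prod_beta intro!: continuous_intros)
  then show ?thesis
    by (intro borel_measurable_lebesgue_integral) auto
qed

lemma phi_bound:
  fixes N :: "'b::euclidean_space measure"
  assumes "finite_measure N" "sets N = sets borel"
  shows "\<bar>\<integral>s. 1 - cos (x \<bullet> s) \<partial>N\<bar> \<le> 2 * measure N (space N)"
proof -
  interpret finite_measure N by fact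
  have "0 \<le> (\<integral>s. 1 - cos (x \<bullet> s) \<partial>N)"
    by (intro Bochner_Integration.integral_nonneg) auto
  moreover have "(\<integral>s. 1 - cos (x \<bullet> s) \<partial>N) \<le> (\<integral>s. 2 \<partial>N)"
    using int_cos[OF assms] by (intro integral_mono) (auto simp: add_increasing)
  ultimately show ?thesis by simp
qed

lemma bdd_int:
  assumes "prob_space M" "f \<in> borel_measurable M" "\<And>\<omega>. \<bar>f \<omega>\<bar> \<le> (B::real)"
  shows "integrable M f"
proof -
  interpret prob_space M by fact
  show ?thesis using assms(2,3) by (intro integrable_const_bound[where B=B]) auto
qed

lemma one_minus_cos_exp:
  fixes W :: "'a \<Rightarrow> 'b::euclidean_space"
  assumes "prob_space M" "W \<in> borel_measurable M"
  shows "(\<integral>\<omega>. 1 - cos (r \<bullet> W \<omega>) \<partial>M) = 1 - (\<integral>\<omega>. cos (r \<bullet> W \<omega>) \<partial>M)"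
proof -
  interpret prob_space M by fact
  have m: "(\<lambda>\<omega>. cos (r \<bullet> W \<omega>)) \<in> borel_measurable M" using assms(2) by measurable
  have "integrable M (\<lambda>\<omega>. cos (r \<bullet> W \<omega>))"
    by (rule bdd_int[OF assms(1) m, where B=1]) auto
  then show ?thesis by (subst Bochner_Integration.integral_diff) (auto simp: prob_space)
qed

lemma cmod_expand:
  "(cmod (a - b))\<^sup>2 = Re (a * cnj a) + Re (b * cnj b) - 2 * Re (a * cnj b)"
  by (subst cmod_power2) (simp add: power2_eq_square algebra_simps)

lemma mfst_Pi:
  assumes "i \<in> I"
  shows "(\<lambda>f. fst (f i)) \<in> borel_measurable (PiM I (\<lambda>_. borel :: ('m::euclidean_space \<times> 'n::euclidean_space) measure))"
proof -
  have "(fst :: 'm \<times> 'n \<Rightarrow> 'm) \<in> borel_measurable borel"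
    by (intro borel_measurable_continuous_onI continuous_intros)
  from measurable_compose[OF measurable_component_singleton[OF assms, of "\<lambda>_. borel"] this] show ?thesis by simp
qed

lemma msnd_Pi:
  assumes "i \<in> I"
  shows "(\<lambda>f. snd (f i)) \<in> borel_measurable (PiM I (\<lambda>_. borel :: ('m::euclidean_space \<times> 'n::euclidean_space) measure))"
proof -
  have "(snd :: 'm \<times> 'n \<Rightarrow> 'n) \<in> borel_measurable borel"
    by (intro borel_measurable_continuous_onI continuous_intros)
  from measurable_compose[OF measurable_component_singleton[OF assms, of "\<lambda>_. borel"] this] show ?thesis by simp
qed

lemma test_meas: "(\<lambda>f. (fst (f (2::nat)), snd (f 3))) \<in> borel_measurable (PiM {2,3} (\<lambda>_. borel :: ('m::euclidean_space \<times> 'n::euclidean_space) measure))"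
  by (intro borel_measurable_Pair mfst_Pi msnd_Pi) auto



theorem proposition3p3:
  fixes M :: "'a measure"
    and X :: "'a \<Rightarrow> 'm::euclidean_space" and Y :: "'a \<Rightarrow> 'n::euclidean_space"
    and Xs :: "nat \<Rightarrow> 'a \<Rightarrow> 'm" and Ys :: "nat \<Rightarrow> 'a \<Rightarrow> 'n"
    and \<mu> :: "'m measure" and \<nu> :: "'n measure"
    and \<Phi> :: "'m \<Rightarrow> real" and \<Psi> :: "'n \<Rightarrow> real" and \<Theta> :: "'m \<times> 'n \<Rightarrow> real"
    and \<rho> :: "('m \<times> 'n) measure"
  assumes "prob_space M"
    and "X \<in> borel_measurable M" and "Y \<in> borel_measurable M"
    and "\<And>i. i \<in> {1..6} \<Longrightarrow> Xs i \<in> borel_measurable M"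
    and "\<And>i. i \<in> {1..6} \<Longrightarrow> Ys i \<in> borel_measurable M"
    and "prob_space.indep_vars M (\<lambda>_. borel) (\<lambda>i \<omega>. (Xs i \<omega>, Ys i \<omega>)) {1..6}"
    and "\<And>i. i \<in> {1..6} \<Longrightarrow>
           distr M borel (\<lambda>\<omega>. (Xs i \<omega>, Ys i \<omega>)) = distr M borel (\<lambda>\<omega>. (X \<omega>, Y \<omega>))"
    and "finite_measure \<mu>" and "finite_measure \<nu>"
    and "sym_levy_measure \<mu>" and "sym_levy_measure \<nu>"
    and "full_support \<mu>" and "full_support \<nu>"
    and "\<Phi> = (\<lambda>x. \<integral>s. 1 - cos (x \<bullet> s) \<partial>\<mu>)"
    and "\<Psi> = (\<lambda>y. \<integral>t. 1 - cos (y \<bullet> t) \<partial>\<nu>)"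
    and "\<rho> = \<mu> \<Otimes>\<^sub>M \<nu>"
    and "\<Theta> = (\<lambda>u. \<integral>r. 1 - cos (u \<bullet> r) \<partial>\<rho>)"
  shows
    "let U = (\<lambda>\<omega>. (Xs 1 \<omega>, Ys 1 \<omega>)); V = (\<lambda>\<omega>. (Xs 2 \<omega>, Ys 3 \<omega>));
         U' = (\<lambda>\<omega>. (Xs 4 \<omega>, Ys 4 \<omega>)); V' = (\<lambda>\<omega>. (Xs 5 \<omega>, Ys 6 \<omega>)) in
     dcov_sq M \<mu> \<nu> X Y = (d_rho \<rho> (distr M borel U) (distr M borel V))\<^sup>2
     \<and> (d_rho \<rho> (distr M borel U) (distr M borel V))\<^sup>2
         = 2 * (\<integral>\<omega>. \<Theta> (U \<omega> - V' \<omega>) \<partial>M) - (\<integral>\<omega>. \<Theta> (U \<omega> - U' \<omega>) \<partial>M)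
           - (\<integral>\<omega>. \<Theta> (V \<omega> - V' \<omega>) \<partial>M)
     \<and> 2 * (\<integral>\<omega>. \<Theta> (U \<omega> - V' \<omega>) \<partial>M) - (\<integral>\<omega>. \<Theta> (U \<omega> - U' \<omega>) \<partial>M)
           - (\<integral>\<omega>. \<Theta> (V \<omega> - V' \<omega>) \<partial>M)
         = 2 * (\<integral>\<omega>. \<Theta> (Xs 1 \<omega> - Xs 5 \<omega>, Ys 1 \<omega> - Ys 6 \<omega>) \<partial>M)
           - (\<integral>\<omega>. \<Theta> (Xs 1 \<omega> - Xs 4 \<omega>, Ys 1 \<omega> - Ys 4 \<omega>) \<partial>M)
           - (\<integral>\<omega>. \<Theta> (Xs 2 \<omega> - Xs 5 \<omega>, Ys 3 \<omega> - Ys 6 \<omega>) \<partial>M)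
     \<and> 2 * (\<integral>\<omega>. \<Theta> (Xs 1 \<omega> - Xs 5 \<omega>, Ys 1 \<omega> - Ys 6 \<omega>) \<partial>M)
           - (\<integral>\<omega>. \<Theta> (Xs 1 \<omega> - Xs 4 \<omega>, Ys 1 \<omega> - Ys 4 \<omega>) \<partial>M)
           - (\<integral>\<omega>. \<Theta> (Xs 2 \<omega> - Xs 5 \<omega>, Ys 3 \<omega> - Ys 6 \<omega>) \<partial>M)
         = (\<integral>\<omega>. \<Phi> (Xs 1 \<omega> - Xs 4 \<omega>) * \<Psi> (Ys 1 \<omega> - Ys 4 \<omega>) \<partial>M)
           + (\<integral>\<omega>. \<Phi> (Xs 2 \<omega> - Xs 5 \<omega>) \<partial>M) * (\<integral>\<omega>. \<Psi> (Ys 3 \<omega> - Ys 6 \<omega>) \<partial>M)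
           - 2 * (\<integral>\<omega>. \<Phi> (Xs 1 \<omega> - Xs 5 \<omega>) * \<Psi> (Ys 1 \<omega> - Ys 6 \<omega>) \<partial>M)"
proof -
  note A = assms
  interpret prob_space M by (rule A(1))
  have mX: "\<And>i. i \<in> {1..6} \<Longrightarrow> Xs i \<in> borel_measurable M" using A(4) by blast
  have mY: "\<And>i. i \<in> {1..6} \<Longrightarrow> Ys i \<in> borel_measurable M" using A(5) by blast
  have mXY: "(\<lambda>\<omega>. (X \<omega>, Y \<omega>)) \<in> borel_measurable M"
    using A(2,3) by (rule borel_measurable_Pair)
  have mXYij: "\<And>i j. i \<in> {1..6} \<Longrightarrow> j \<in> {1..6} \<Longrightarrow> (\<lambda>\<omega>. (Xs i \<omega>, Ys j \<omega>)) \<in> borel_measurable M"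
    using mX mY by (intro borel_measurable_Pair) auto
  have ind: "indep_vars (\<lambda>_. borel) (\<lambda>i \<omega>. (Xs i \<omega>, Ys i \<omega>)) {1..6}" using A(6) .
  have sm: "sets \<mu> = sets borel" using A(10) unfolding sym_levy_measure_def by auto
  have sn: "sets \<nu> = sets borel" using A(11) unfolding sym_levy_measure_def by auto
  have sr: "sets \<rho> = sets borel" unfolding A(16) by (rule sets_pair_borel[OF sm sn])
  have fr: "finite_measure \<rho>" unfolding A(16) by (rule finite_measure_pair_measure[OF A(9) A(8)])
  interpret fm: finite_measure \<mu> by (rule A(8))
  interpret fn: finite_measure \<nu> by (rule A(9))
  interpret fr: finite_measure \<rho> by (rule fr)

  have C2: "charf (distr M borel (Xs i)) s = char_fun M X s" if i: "i \<in> {1..6}" for i s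
  proof -
    have "charf (distr M borel (Xs i)) s = (\<integral>\<omega>. cis ((s, 0) \<bullet> (Xs i \<omega>, Ys i \<omega>)) \<partial>M)"
      using mX[OF i] by (simp add: charf_distr)
    also have "\<dots> = charf (distr M borel (\<lambda>\<omega>. (Xs i \<omega>, Ys i \<omega>))) (s, 0)"
      using mXYij[OF i i] by (simp add: charf_distr)
    also have "\<dots> = charf (distr M borel (\<lambda>\<omega>. (X \<omega>, Y \<omega>))) (s, 0)"
      using A(7)[OF i] by simp
    also have "\<dots> = (\<integral>\<omega>. cis (s \<bullet> X \<omega>) \<partial>M)"
      using mXY by (simp add: charf_distr)
    also have "\<dots> = char_fun M X s"
      using A(2) by (simp add: charf_distr char_fun_def)
    finally show ?thesis .
  qed
  have C3: "charf (distr M borel (Ys i)) t = char_fun M Y t" if i: "i \<in> {1..6}" for i t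
  proof -
    have "charf (distr M borel (Ys i)) t = (\<integral>\<omega>. cis ((0, t) \<bullet> (Xs i \<omega>, Ys i \<omega>)) \<partial>M)"
      using mY[OF i] by (simp add: charf_distr)
    also have "\<dots> = charf (distr M borel (\<lambda>\<omega>. (Xs i \<omega>, Ys i \<omega>))) (0, t)"
      using mXYij[OF i i] by (simp add: charf_distr)
    also have "\<dots> = charf (distr M borel (\<lambda>\<omega>. (X \<omega>, Y \<omega>))) (0, t)"
      using A(7)[OF i] by simp
    also have "\<dots> = (\<integral>\<omega>. cis (t \<bullet> Y \<omega>) \<partial>M)"
      using mXY by (simp add: charf_distr)
    also have "\<dots> = char_fun M Y t"
      using A(3) by (simp add: charf_distr char_fun_def)
    finally show ?thesis .
  qed
  have C1: "charf (distr M borel (\<lambda>\<omega>. (Xs i \<omega>, Ys i \<omega>))) r = char_fun M (\<lambda>\<omega>. (X \<omega>, Y \<omega>)) r"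
    if i: "i \<in> {1..6}" for i r
    using A(7)[OF i] by (simp add: char_fun_def)

  have indXX: "indep_var borel (Xs i) borel (Xs j)"
    if "i \<in> {1..6}" "j \<in> {1..6}" "i \<noteq> j" for i j
  proof -
    have "indep_var borel (\<lambda>\<omega>. (\<lambda>f. fst (f i)) (\<lambda>k\<in>{i}. (Xs k \<omega>, Ys k \<omega>)))
                     borel (\<lambda>\<omega>. (\<lambda>f. fst (f j)) (\<lambda>k\<in>{j}. (Xs k \<omega>, Ys k \<omega>)))"
      using that by (intro indep_grp[OF A(1) ind] mfst_Pi msnd_Pi) auto
    then show ?thesis by simp
  qed
  have indYY: "indep_var borel (Ys i) borel (Ys j)"
    if "i \<in> {1..6}" "j \<in> {1..6}" "i \<noteq> j" for i j
  proof -
    have "indep_var borel (\<lambda>\<omega>. (\<lambda>f. snd (f i)) (\<lambda>k\<in>{i}. (Xs k \<omega>, Ys k \<omega>)))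
                     borel (\<lambda>\<omega>. (\<lambda>f. snd (f j)) (\<lambda>k\<in>{j}. (Xs k \<omega>, Ys k \<omega>)))"
      using that by (intro indep_grp[OF A(1) ind] mfst_Pi msnd_Pi) auto
    then show ?thesis by simp
  qed

  have C4: "charf (distr M borel (\<lambda>\<omega>. (Xs i \<omega>, Ys j \<omega>))) r = char_fun M X (fst r) * char_fun M Y (snd r)"
    if ij: "i \<in> {1..6}" "j \<in> {1..6}" "i \<noteq> j" for i j r
  proof -
    obtain s t where r: "r = (s, t)" by (cases r)
    have i2: "indep_var borel (\<lambda>\<omega>. cis (s \<bullet> Xs i \<omega>)) borel (\<lambda>\<omega>. cis (t \<bullet> Ys j \<omega>))"
    proof -
      have "indep_var borel (\<lambda>\<omega>. (\<lambda>f. cis (s \<bullet> fst (f i))) (\<lambda>k\<in>{i}. (Xs k \<omega>, Ys k \<omega>)))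
                     borel (\<lambda>\<omega>. (\<lambda>f. cis (t \<bullet> snd (f j))) (\<lambda>k\<in>{j}. (Xs k \<omega>, Ys k \<omega>)))"
        using ij by (intro indep_grp[OF A(1) ind] measurable_compose[OF mfst_Pi cis_inner_meas]
              measurable_compose[OF msnd_Pi cis_inner_meas]) auto
      then show ?thesis by simp
    qed
    have m1: "(\<lambda>\<omega>. cis (s \<bullet> Xs i \<omega>)) \<in> borel_measurable M"
      using measurable_compose[OF mX[OF ij(1)] cis_inner_meas] .
    have m2: "(\<lambda>\<omega>. cis (t \<bullet> Ys j \<omega>)) \<in> borel_measurable M"
      using measurable_compose[OF mY[OF ij(2)] cis_inner_meas] .
    have int1: "integrable M (\<lambda>\<omega>. cis (s \<bullet> Xs i \<omega>))"
      by (rule integrable_const_bound[where B=1]) (auto simp: m1)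
    have int2: "integrable M (\<lambda>\<omega>. cis (t \<bullet> Ys j \<omega>))"
      by (rule integrable_const_bound[where B=1]) (auto simp: m2)
    have "charf (distr M borel (\<lambda>\<omega>. (Xs i \<omega>, Ys j \<omega>))) r = (\<integral>\<omega>. cis (s \<bullet> Xs i \<omega>) * cis (t \<bullet> Ys j \<omega>) \<partial>M)"
      using mXYij[OF ij(1,2)] by (simp add: charf_distr r cis_mult)
    also have "\<dots> = (\<integral>\<omega>. cis (s \<bullet> Xs i \<omega>) \<partial>M) * (\<integral>\<omega>. cis (t \<bullet> Ys j \<omega>) \<partial>M)"
      by (rule indep_var_lebesgue_integral[OF i2 int1 int2])
    also have "\<dots> = charf (distr M borel (Xs i)) s * charf (distr M borel (Ys j)) t"
      using mX[OF ij(1)] mY[OF ij(2)] by (simp add: charf_distr)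
    finally show ?thesis using C2[OF ij(1)] C3[OF ij(2)] r by simp
  qed
  define U where "U = (\<lambda>\<omega>. (Xs 1 \<omega>, Ys 1 \<omega>))"
  define V where "V = (\<lambda>\<omega>. (Xs 2 \<omega>, Ys 3 \<omega>))"
  define U' where "U' = (\<lambda>\<omega>. (Xs 4 \<omega>, Ys 4 \<omega>))"
  define V' where "V' = (\<lambda>\<omega>. (Xs 5 \<omega>, Ys 6 \<omega>))"
  define cU where "cU = char_fun M (\<lambda>\<omega>. (X \<omega>, Y \<omega>))"
  define cV where "cV = (\<lambda>r. char_fun M X (fst r) * char_fun M Y (snd r))"
  have mU: "U \<in> borel_measurable M" "U' \<in> borel_measurable M"
    "V \<in> borel_measurable M" "V' \<in> borel_measurable M"
    unfolding U_def U'_def V_def V'_def by (auto intro!: mXYij)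
  have fU: "charf (distr M borel U) r = cU r" "charf (distr M borel U') r = cU r" for r
    unfolding U_def U'_def cU_def by (auto intro!: C1)
  have fV: "charf (distr M borel V) r = cV r" "charf (distr M borel V') r = cV r" for r
    unfolding V_def V'_def cV_def by (auto intro!: C4)
  have indUU': "indep_var borel U borel U'"
  proof -
    have "indep_var borel (\<lambda>\<omega>. (\<lambda>f. f 1) (\<lambda>k\<in>{1}. (Xs k \<omega>, Ys k \<omega>)))
                   borel (\<lambda>\<omega>. (\<lambda>f. f 4) (\<lambda>k\<in>{4}. (Xs k \<omega>, Ys k \<omega>)))"
      by (intro indep_grp[OF A(1) ind] measurable_component_singleton) auto
    then show ?thesis by (simp add: U_def U'_def)
  qed
  have indUV': "indep_var borel U borel V'"
  proof -
    have "indep_var borel (\<lambda>\<omega>. (\<lambda>f. f 1) (\<lambda>k\<in>{1}. (Xs k \<omega>, Ys k \<omega>)))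
                   borel (\<lambda>\<omega>. (\<lambda>f. (fst (f 5), snd (f 6))) (\<lambda>k\<in>{5,6}. (Xs k \<omega>, Ys k \<omega>)))"
      by (intro indep_grp[OF A(1) ind] measurable_component_singleton borel_measurable_Pair mfst_Pi msnd_Pi) auto
    then show ?thesis by (simp add: U_def V'_def)
  qed
  have indVV': "indep_var borel V borel V'"
  proof -
    have "indep_var borel (\<lambda>\<omega>. (\<lambda>f. (fst (f 2), snd (f 3))) (\<lambda>k\<in>{2,3}. (Xs k \<omega>, Ys k \<omega>)))
                   borel (\<lambda>\<omega>. (\<lambda>f. (fst (f 5), snd (f 6))) (\<lambda>k\<in>{5,6}. (Xs k \<omega>, Ys k \<omega>)))"
      by (intro indep_grp[OF A(1) ind] borel_measurable_Pair mfst_Pi msnd_Pi) auto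
    then show ?thesis by (simp add: V_def V'_def)
  qed
  define h where "h r = (cmod (cU r - cV r))\<^sup>2" for r
  have pU: "prob_space (distr M borel U)" "prob_space (distr M borel V)"
    by (rule prob_space_distr[OF mU(1)], rule prob_space_distr[OF mU(3)])
  have eU: "charf (distr M borel U) = cU" by (rule ext) (rule fU(1))
  have eV: "charf (distr M borel V) = cV" by (rule ext) (rule fV(1))
  have cUm: "cU \<in> borel_measurable \<rho>"
  proof -
    have "charf (distr M borel U) \<in> borel_measurable \<rho>" by (rule charf_meas[OF pU(1) _ sr]) simp
    then show ?thesis unfolding eU .
  qed
  have cVm: "cV \<in> borel_measurable \<rho>"
  proof -
    have "charf (distr M borel V) \<in> borel_measurable \<rho>" by (rule charf_meas[OF pU(2) _ sr]) simp
    then show ?thesis unfolding eV .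
  qed
  have hmeas: "h \<in> borel_measurable \<rho>"
    unfolding h_def[abs_def] using cUm cVm by measurable
  have hbd: "0 \<le> h r \<and> h r \<le> 4" for r
  proof -
    have "cmod (cU r) \<le> 1" "cmod (cV r) \<le> 1"
      using charf_bound[OF pU(1), of r] charf_bound[OF pU(2), of r] unfolding eU eV by auto
    then have "cmod (cU r - cV r) \<le> 2" using norm_triangle_ineq4[of "cU r" "cV r"] by linarith
    then have "(cmod (cU r - cV r))\<^sup>2 \<le> 2\<^sup>2" by (intro power_mono) auto
    then show ?thesis by (simp add: h_def)
  qed
  have hint: "integrable \<rho> h"
    using hbd by (intro fr.integrable_const_bound[where B=4]) (auto simp: hmeas)
  have dU: "(d_rho \<rho> (distr M borel U) (distr M borel V))\<^sup>2 = (\<integral>r. h r \<partial>\<rho>)"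
  proof -
    have "0 \<le> (\<integral>r. h r \<partial>\<rho>)" using hbd by (intro Bochner_Integration.integral_nonneg) auto
    then show ?thesis unfolding d_rho_def eU eV h_def by simp
  qed
  have P1: "dcov_sq M \<mu> \<nu> X Y = (\<integral>r. h r \<partial>\<rho>)"
  proof -
    interpret pmn: pair_sigma_finite \<mu> \<nu> ..
    have "dcov_sq M \<mu> \<nu> X Y = (\<integral>t. (\<integral>s. h (s, t) \<partial>\<mu>) \<partial>\<nu>)"
      unfolding dcov_sq_def h_def cU_def cV_def by simp
    also have "\<dots> = (\<integral>r. (\<lambda>(s,t). h (s,t)) r \<partial>(\<mu> \<Otimes>\<^sub>M \<nu>))"
      by (rule pmn.integral_snd) (use hint A(16) in simp)
    finally show ?thesis by (simp add: A(16))
  qed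
  have hexp: "h r = 2 * (\<integral>\<omega>. 1 - cos (r \<bullet> (U \<omega> - V' \<omega>)) \<partial>M)
       - (\<integral>\<omega>. 1 - cos (r \<bullet> (U \<omega> - U' \<omega>)) \<partial>M) - (\<integral>\<omega>. 1 - cos (r \<bullet> (V \<omega> - V' \<omega>)) \<partial>M)" for r
  proof -
    have e1: "(\<integral>\<omega>. cos (r \<bullet> (U \<omega> - U' \<omega>)) \<partial>M) = Re (cU r * cnj (cU r))"
      using char_indep[OF A(1) indUU', of r] unfolding eU fU(2) .
    have e2: "(\<integral>\<omega>. cos (r \<bullet> (V \<omega> - V' \<omega>)) \<partial>M) = Re (cV r * cnj (cV r))"
      using char_indep[OF A(1) indVV', of r] unfolding eV fV(2) .
    have e3: "(\<integral>\<omega>. cos (r \<bullet> (U \<omega> - V' \<omega>)) \<partial>M) = Re (cU r * cnj (cV r))"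
      using char_indep[OF A(1) indUV', of r] unfolding eU fV(2) .
    have m: "(\<lambda>\<omega>. U \<omega> - V' \<omega>) \<in> borel_measurable M" "(\<lambda>\<omega>. U \<omega> - U' \<omega>) \<in> borel_measurable M"
      "(\<lambda>\<omega>. V \<omega> - V' \<omega>) \<in> borel_measurable M" using mU by (auto intro!: borel_measurable_diff)
    show ?thesis
      unfolding one_minus_cos_exp[OF A(1) m(1)] one_minus_cos_exp[OF A(1) m(2)] one_minus_cos_exp[OF A(1) m(3)]
        e1 e2 e3 h_def cmod_expand by simp
  qed
  have FU: "integrable \<rho> (\<lambda>r. \<integral>\<omega>. 1 - cos (r \<bullet> W \<omega>) \<partial>M)"
    "(\<integral>r. (\<integral>\<omega>. 1 - cos (r \<bullet> W \<omega>) \<partial>M) \<partial>\<rho>) = (\<integral>\<omega>. \<Theta> (W \<omega>) \<partial>M)"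
    if "W \<in> borel_measurable M" for W
    using Fub[OF A(1) fr sr that] by (auto simp: A(17))
  have mW: "(\<lambda>\<omega>. U \<omega> - V' \<omega>) \<in> borel_measurable M" "(\<lambda>\<omega>. U \<omega> - U' \<omega>) \<in> borel_measurable M"
      "(\<lambda>\<omega>. V \<omega> - V' \<omega>) \<in> borel_measurable M" using mU by (auto intro!: borel_measurable_diff)
  have P2: "(\<integral>r. h r \<partial>\<rho>) = 2 * (\<integral>\<omega>. \<Theta> (U \<omega> - V' \<omega>) \<partial>M) - (\<integral>\<omega>. \<Theta> (U \<omega> - U' \<omega>) \<partial>M)
           - (\<integral>\<omega>. \<Theta> (V \<omega> - V' \<omega>) \<partial>M)"
  proof -
    note I1 = FU[OF mW(1)] and I2 = FU[OF mW(2)] and I3 = FU[OF mW(3)]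
    have "(\<integral>r. h r \<partial>\<rho>) = (\<integral>r. 2 * (\<integral>\<omega>. 1 - cos (r \<bullet> (U \<omega> - V' \<omega>)) \<partial>M)
       - (\<integral>\<omega>. 1 - cos (r \<bullet> (U \<omega> - U' \<omega>)) \<partial>M) - (\<integral>\<omega>. 1 - cos (r \<bullet> (V \<omega> - V' \<omega>)) \<partial>M) \<partial>\<rho>)"
      by (simp only: hexp)
    also have "\<dots> = (\<integral>r. 2 * (\<integral>\<omega>. 1 - cos (r \<bullet> (U \<omega> - V' \<omega>)) \<partial>M)
       - (\<integral>\<omega>. 1 - cos (r \<bullet> (U \<omega> - U' \<omega>)) \<partial>M) \<partial>\<rho>) - (\<integral>r. (\<integral>\<omega>. 1 - cos (r \<bullet> (V \<omega> - V' \<omega>)) \<partial>M) \<partial>\<rho>)"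
      by (rule Bochner_Integration.integral_diff[OF Bochner_Integration.integrable_diff[OF integrable_mult_right[OF I1(1)] I2(1)] I3(1)])
    also have "(\<integral>r. 2 * (\<integral>\<omega>. 1 - cos (r \<bullet> (U \<omega> - V' \<omega>)) \<partial>M)
       - (\<integral>\<omega>. 1 - cos (r \<bullet> (U \<omega> - U' \<omega>)) \<partial>M) \<partial>\<rho>)
       = (\<integral>r. 2 * (\<integral>\<omega>. 1 - cos (r \<bullet> (U \<omega> - V' \<omega>)) \<partial>M) \<partial>\<rho>)
       - (\<integral>r. (\<integral>\<omega>. 1 - cos (r \<bullet> (U \<omega> - U' \<omega>)) \<partial>M) \<partial>\<rho>)"
      by (rule Bochner_Integration.integral_diff[OF integrable_mult_right[OF I1(1)] I2(1)])
    also have "(\<integral>r. 2 * (\<integral>\<omega>. 1 - cos (r \<bullet> (U \<omega> - V' \<omega>)) \<partial>M) \<partial>\<rho>)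
       = 2 * (\<integral>r. (\<integral>\<omega>. 1 - cos (r \<bullet> (U \<omega> - V' \<omega>)) \<partial>M) \<partial>\<rho>)"
      by (rule Bochner_Integration.integral_mult_right[OF I1(1)])
    finally show ?thesis unfolding I1(2) I2(2) I3(2) .
  qed
  have P3: "2 * (\<integral>\<omega>. \<Theta> (U \<omega> - V' \<omega>) \<partial>M) - (\<integral>\<omega>. \<Theta> (U \<omega> - U' \<omega>) \<partial>M)
           - (\<integral>\<omega>. \<Theta> (V \<omega> - V' \<omega>) \<partial>M)
         = 2 * (\<integral>\<omega>. \<Theta> (Xs 1 \<omega> - Xs 5 \<omega>, Ys 1 \<omega> - Ys 6 \<omega>) \<partial>M)
           - (\<integral>\<omega>. \<Theta> (Xs 1 \<omega> - Xs 4 \<omega>, Ys 1 \<omega> - Ys 4 \<omega>) \<partial>M)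
           - (\<integral>\<omega>. \<Theta> (Xs 2 \<omega> - Xs 5 \<omega>, Ys 3 \<omega> - Ys 6 \<omega>) \<partial>M)"
    by (simp add: U_def U'_def V_def V'_def)
  define \<mu>1 where "\<mu>1 = measure \<mu> (space \<mu>)"
  define \<nu>1 where "\<nu>1 = measure \<nu> (space \<nu>)"
  have thd: "\<Theta> (a, b) = \<nu>1 * \<Phi> a + \<mu>1 * \<Psi> b - \<Phi> a * \<Psi> b" for a b
    unfolding A(17) A(16) A(14) A(15) \<mu>1_def \<nu>1_def
    by (rule theta_dec[OF A(8) A(9) sm sn sin_sym_zero[OF A(11)]])
  have mPhi: "\<Phi> \<in> borel_measurable borel" unfolding A(14) by (rule phi_meas[OF A(8) sm])
  have mPsi: "\<Psi> \<in> borel_measurable borel" unfolding A(15) by (rule phi_meas[OF A(9) sn])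
  have bPhi: "\<bar>\<Phi> x\<bar> \<le> 2 * \<mu>1" for x unfolding A(14) \<mu>1_def by (rule phi_bound[OF A(8) sm])
  have bPsi: "\<bar>\<Psi> x\<bar> \<le> 2 * \<nu>1" for x unfolding A(15) \<nu>1_def by (rule phi_bound[OF A(9) sn])
  have iPhi: "integrable M (\<lambda>\<omega>. \<Phi> (a \<omega>))" if "a \<in> borel_measurable M" for a
    by (rule bdd_int[OF A(1) measurable_compose[OF that mPhi] bPhi])
  have iPsi: "integrable M (\<lambda>\<omega>. \<Psi> (b \<omega>))" if "b \<in> borel_measurable M" for b
    by (rule bdd_int[OF A(1) measurable_compose[OF that mPsi] bPsi])
  have iPP: "integrable M (\<lambda>\<omega>. \<Phi> (a \<omega>) * \<Psi> (b \<omega>))"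
    if "a \<in> borel_measurable M" "b \<in> borel_measurable M" for a b
  proof (rule bdd_int[OF A(1) borel_measurable_times[OF measurable_compose[OF that(1) mPhi] measurable_compose[OF that(2) mPsi]]])
    fix \<omega>
    show "\<bar>\<Phi> (a \<omega>) * \<Psi> (b \<omega>)\<bar> \<le> (2 * \<mu>1) * (2 * \<nu>1)"
      unfolding abs_mult by (rule mult_mono[OF bPhi bPsi]) (auto simp: \<mu>1_def)
  qed
  have ETheta: "(\<integral>\<omega>. \<Theta> (a \<omega>, b \<omega>) \<partial>M)
      = \<nu>1 * (\<integral>\<omega>. \<Phi> (a \<omega>) \<partial>M) + \<mu>1 * (\<integral>\<omega>. \<Psi> (b \<omega>) \<partial>M) - (\<integral>\<omega>. \<Phi> (a \<omega>) * \<Psi> (b \<omega>) \<partial>M)"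
    if "a \<in> borel_measurable M" "b \<in> borel_measurable M" for a b
  proof -
    note ia = iPhi[OF that(1)] and ib = iPsi[OF that(2)] and iab = iPP[OF that]
    have "(\<integral>\<omega>. \<Theta> (a \<omega>, b \<omega>) \<partial>M) = (\<integral>\<omega>. (\<nu>1 * \<Phi> (a \<omega>) + \<mu>1 * \<Psi> (b \<omega>)) - \<Phi> (a \<omega>) * \<Psi> (b \<omega>) \<partial>M)"
      by (simp only: thd)
    also have "\<dots> = (\<integral>\<omega>. \<nu>1 * \<Phi> (a \<omega>) + \<mu>1 * \<Psi> (b \<omega>) \<partial>M) - (\<integral>\<omega>. \<Phi> (a \<omega>) * \<Psi> (b \<omega>) \<partial>M)"
      by (rule Bochner_Integration.integral_diff[OF Bochner_Integration.integrable_add[OF integrable_mult_right[OF ia] integrable_mult_right[OF ib]] iab])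
    also have "(\<integral>\<omega>. \<nu>1 * \<Phi> (a \<omega>) + \<mu>1 * \<Psi> (b \<omega>) \<partial>M) = (\<integral>\<omega>. \<nu>1 * \<Phi> (a \<omega>) \<partial>M) + (\<integral>\<omega>. \<mu>1 * \<Psi> (b \<omega>) \<partial>M)"
      by (rule Bochner_Integration.integral_add[OF integrable_mult_right[OF ia] integrable_mult_right[OF ib]])
    finally show ?thesis by simp
  qed
  have mDX: "(\<lambda>\<omega>. Xs i \<omega> - Xs j \<omega>) \<in> borel_measurable M" if "i \<in> {1..6}" "j \<in> {1..6}" for i j
    using mX[OF that(1)] mX[OF that(2)] by (rule borel_measurable_diff)
  have mDY: "(\<lambda>\<omega>. Ys i \<omega> - Ys j \<omega>) \<in> borel_measurable M" if "i \<in> {1..6}" "j \<in> {1..6}" for i j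
    using mY[OF that(1)] mY[OF that(2)] by (rule borel_measurable_diff)
  have KPhi: "(\<integral>\<omega>. \<Phi> (Xs i \<omega> - Xs j \<omega>) \<partial>M) = (\<integral>s. 1 - Re (char_fun M X s * cnj (char_fun M X s)) \<partial>\<mu>)"
    if ij: "i \<in> {1..6}" "j \<in> {1..6}" "i \<noteq> j" for i j
  proof -
    note mW = mDX[OF ij(1,2)]
    have "(\<integral>s. 1 - Re (char_fun M X s * cnj (char_fun M X s)) \<partial>\<mu>)
        = (\<integral>s. (\<integral>\<omega>. 1 - cos (s \<bullet> (Xs i \<omega> - Xs j \<omega>)) \<partial>M) \<partial>\<mu>)"
      by (rule Bochner_Integration.integral_cong[OF refl])
        (simp add: one_minus_cos_exp[OF A(1) mW] char_indep[OF A(1) indXX[OF ij]] C2[OF ij(1)] C2[OF ij(2)])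
    also have "\<dots> = (\<integral>\<omega>. (\<integral>s. 1 - cos ((Xs i \<omega> - Xs j \<omega>) \<bullet> s) \<partial>\<mu>) \<partial>M)"
      by (rule Fub(2)[OF A(1) A(8) sm mW])
    finally show ?thesis by (simp add: A(14))
  qed
  have KPsi: "(\<integral>\<omega>. \<Psi> (Ys i \<omega> - Ys j \<omega>) \<partial>M) = (\<integral>t. 1 - Re (char_fun M Y t * cnj (char_fun M Y t)) \<partial>\<nu>)"
    if ij: "i \<in> {1..6}" "j \<in> {1..6}" "i \<noteq> j" for i j
  proof -
    note mW = mDY[OF ij(1,2)]
    have "(\<integral>t. 1 - Re (char_fun M Y t * cnj (char_fun M Y t)) \<partial>\<nu>)
        = (\<integral>t. (\<integral>\<omega>. 1 - cos (t \<bullet> (Ys i \<omega> - Ys j \<omega>)) \<partial>M) \<partial>\<nu>)"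
      by (rule Bochner_Integration.integral_cong[OF refl])
        (simp add: one_minus_cos_exp[OF A(1) mW] char_indep[OF A(1) indYY[OF ij]] C3[OF ij(1)] C3[OF ij(2)])
    also have "\<dots> = (\<integral>\<omega>. (\<integral>t. 1 - cos ((Ys i \<omega> - Ys j \<omega>) \<bullet> t) \<partial>\<nu>) \<partial>M)"
      by (rule Fub(2)[OF A(1) A(9) sn mW])
    finally show ?thesis by (simp add: A(15))
  qed
  have indP: "indep_var borel (\<lambda>\<omega>. \<Phi> (Xs 2 \<omega> - Xs 5 \<omega>)) borel (\<lambda>\<omega>. \<Psi> (Ys 3 \<omega> - Ys 6 \<omega>))"
  proof -
    have "indep_var borel (\<lambda>\<omega>. (\<lambda>f. \<Phi> (fst (f 2) - fst (f 5))) (\<lambda>k\<in>{2,5}. (Xs k \<omega>, Ys k \<omega>)))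
                   borel (\<lambda>\<omega>. (\<lambda>f. \<Psi> (snd (f 3) - snd (f 6))) (\<lambda>k\<in>{3,6}. (Xs k \<omega>, Ys k \<omega>)))"
      by (intro indep_grp[OF A(1) ind] measurable_compose[OF borel_measurable_diff[OF mfst_Pi mfst_Pi] mPhi]
          measurable_compose[OF borel_measurable_diff[OF msnd_Pi msnd_Pi] mPsi]) auto
    then show ?thesis by simp
  qed
  have prodE: "(\<integral>\<omega>. \<Phi> (Xs 2 \<omega> - Xs 5 \<omega>) * \<Psi> (Ys 3 \<omega> - Ys 6 \<omega>) \<partial>M)
      = (\<integral>\<omega>. \<Phi> (Xs 2 \<omega> - Xs 5 \<omega>) \<partial>M) * (\<integral>\<omega>. \<Psi> (Ys 3 \<omega> - Ys 6 \<omega>) \<partial>M)"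
    by (rule indep_var_lebesgue_integral[OF indP iPhi[OF mDX] iPsi[OF mDY]]) auto
  have E1: "(\<integral>\<omega>. \<Theta> (Xs 1 \<omega> - Xs 5 \<omega>, Ys 1 \<omega> - Ys 6 \<omega>) \<partial>M)
     = \<nu>1 * (\<integral>s. 1 - Re (char_fun M X s * cnj (char_fun M X s)) \<partial>\<mu>)
       + \<mu>1 * (\<integral>t. 1 - Re (char_fun M Y t * cnj (char_fun M Y t)) \<partial>\<nu>)
       - (\<integral>\<omega>. \<Phi> (Xs 1 \<omega> - Xs 5 \<omega>) * \<Psi> (Ys 1 \<omega> - Ys 6 \<omega>) \<partial>M)"
    using ETheta[OF mDX mDY, of 1 5 1 6] KPhi[of 1 5] KPsi[of 1 6] by simp
  have E2: "(\<integral>\<omega>. \<Theta> (Xs 1 \<omega> - Xs 4 \<omega>, Ys 1 \<omega> - Ys 4 \<omega>) \<partial>M)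
     = \<nu>1 * (\<integral>s. 1 - Re (char_fun M X s * cnj (char_fun M X s)) \<partial>\<mu>)
       + \<mu>1 * (\<integral>t. 1 - Re (char_fun M Y t * cnj (char_fun M Y t)) \<partial>\<nu>)
       - (\<integral>\<omega>. \<Phi> (Xs 1 \<omega> - Xs 4 \<omega>) * \<Psi> (Ys 1 \<omega> - Ys 4 \<omega>) \<partial>M)"
    using ETheta[OF mDX mDY, of 1 4 1 4] KPhi[of 1 4] KPsi[of 1 4] by simp
  have E3: "(\<integral>\<omega>. \<Theta> (Xs 2 \<omega> - Xs 5 \<omega>, Ys 3 \<omega> - Ys 6 \<omega>) \<partial>M)
     = \<nu>1 * (\<integral>s. 1 - Re (char_fun M X s * cnj (char_fun M X s)) \<partial>\<mu>)
       + \<mu>1 * (\<integral>t. 1 - Re (char_fun M Y t * cnj (char_fun M Y t)) \<partial>\<nu>)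
       - (\<integral>\<omega>. \<Phi> (Xs 2 \<omega> - Xs 5 \<omega>) \<partial>M) * (\<integral>\<omega>. \<Psi> (Ys 3 \<omega> - Ys 6 \<omega>) \<partial>M)"
    using ETheta[OF mDX mDY, of 2 5 3 6] KPhi[of 2 5] KPsi[of 3 6] prodE by simp
  have P4: "2 * (\<integral>\<omega>. \<Theta> (Xs 1 \<omega> - Xs 5 \<omega>, Ys 1 \<omega> - Ys 6 \<omega>) \<partial>M)
           - (\<integral>\<omega>. \<Theta> (Xs 1 \<omega> - Xs 4 \<omega>, Ys 1 \<omega> - Ys 4 \<omega>) \<partial>M)
           - (\<integral>\<omega>. \<Theta> (Xs 2 \<omega> - Xs 5 \<omega>, Ys 3 \<omega> - Ys 6 \<omega>) \<partial>M)
         = (\<integral>\<omega>. \<Phi> (Xs 1 \<omega> - Xs 4 \<omega>) * \<Psi> (Ys 1 \<omega> - Ys 4 \<omega>) \<partial>M)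
           + (\<integral>\<omega>. \<Phi> (Xs 2 \<omega> - Xs 5 \<omega>) \<partial>M) * (\<integral>\<omega>. \<Psi> (Ys 3 \<omega> - Ys 6 \<omega>) \<partial>M)
           - 2 * (\<integral>\<omega>. \<Phi> (Xs 1 \<omega> - Xs 5 \<omega>) * \<Psi> (Ys 1 \<omega> - Ys 6 \<omega>) \<partial>M)"
    unfolding E1 E2 E3 by (simp add: algebra_simps)
  have all: "dcov_sq M \<mu> \<nu> X Y = (d_rho \<rho> (distr M borel U) (distr M borel V))\<^sup>2
     \<and> (d_rho \<rho> (distr M borel U) (distr M borel V))\<^sup>2
         = 2 * (\<integral>\<omega>. \<Theta> (U \<omega> - V' \<omega>) \<partial>M) - (\<integral>\<omega>. \<Theta> (U \<omega> - U' \<omega>) \<partial>M)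
           - (\<integral>\<omega>. \<Theta> (V \<omega> - V' \<omega>) \<partial>M)
     \<and> 2 * (\<integral>\<omega>. \<Theta> (U \<omega> - V' \<omega>) \<partial>M) - (\<integral>\<omega>. \<Theta> (U \<omega> - U' \<omega>) \<partial>M)
           - (\<integral>\<omega>. \<Theta> (V \<omega> - V' \<omega>) \<partial>M)
         = 2 * (\<integral>\<omega>. \<Theta> (Xs 1 \<omega> - Xs 5 \<omega>, Ys 1 \<omega> - Ys 6 \<omega>) \<partial>M)
           - (\<integral>\<omega>. \<Theta> (Xs 1 \<omega> - Xs 4 \<omega>, Ys 1 \<omega> - Ys 4 \<omega>) \<partial>M)
           - (\<integral>\<omega>. \<Theta> (Xs 2 \<omega> - Xs 5 \<omega>, Ys 3 \<omega> - Ys 6 \<omega>) \<partial>M)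
     \<and> 2 * (\<integral>\<omega>. \<Theta> (Xs 1 \<omega> - Xs 5 \<omega>, Ys 1 \<omega> - Ys 6 \<omega>) \<partial>M)
           - (\<integral>\<omega>. \<Theta> (Xs 1 \<omega> - Xs 4 \<omega>, Ys 1 \<omega> - Ys 4 \<omega>) \<partial>M)
           - (\<integral>\<omega>. \<Theta> (Xs 2 \<omega> - Xs 5 \<omega>, Ys 3 \<omega> - Ys 6 \<omega>) \<partial>M)
         = (\<integral>\<omega>. \<Phi> (Xs 1 \<omega> - Xs 4 \<omega>) * \<Psi> (Ys 1 \<omega> - Ys 4 \<omega>) \<partial>M)
           + (\<integral>\<omega>. \<Phi> (Xs 2 \<omega> - Xs 5 \<omega>) \<partial>M) * (\<integral>\<omega>. \<Psi> (Ys 3 \<omega> - Ys 6 \<omega>) \<partial>M)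
           - 2 * (\<integral>\<omega>. \<Phi> (Xs 1 \<omega> - Xs 5 \<omega>) * \<Psi> (Ys 1 \<omega> - Ys 6 \<omega>) \<partial>M)"
    using P1 dU P2 P3 P4 by simp
  show ?thesis
    using all unfolding Let_def U_def U'_def V_def V'_def .
qed

end
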